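(* Let $n \ge 2$ be an integer, $\lambda > 0$ a real number, $C \ge 1$ and $m$ a positive integer with $m \le n+1$. There exists a constant $C'>0$ depending only on $n$, $m$ and $C$ such that the following holds. Let $(p_0,\ldots,p_n) \in \mathbb{Z}^{n+1}$ with $q := p_0 \ge 1$, $C^{-1} q \le |p_i| \le C q$ for all $i$, and $|p_{i-1}p_{i+1} - p_i^2| \le C q^{1-\lambda}$ for all $i \in \{1,\ldots,n-1\}$. For $i = 0,\ldots,n-m+1$ let $\mathbf{y}_i = (p_i, p_{i+1}, \ldots, p_{i+m-1}) \in \mathbb{Z}^m$. Then for any integers $c_1,\ldots,c_m \in \{0,\ldots,n-m+1\}$, the determinant $d(c_1,\ldots,c_m)$ of the $m\times m$ matrix with rows $\mathbf{y}_{c_1},\ldots,\mathbf{y}_{c_m}$ satisfies $|d(c_1,\ldots,c_m)| \le C' q^{1-(m-1)\lambda}$.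
   Context: The paper writes these statements with Vinogradov notation ($\ll$, $\asymp$); here implied constants are made explicit. *)

theory Defs
  imports "Jordan_Normal_Form.Determinant"
begin

end

theory Submission
  imports Defs
begin


lemma det_bound:
  fixes B :: "real mat"
  assumes B: "B \<in> carrier_mat m m" and m1: "m \<ge> 1" and X0: "X \<ge> 0" and Y0: "Y \<ge> 0"
    and row0: "\<And>j. j < m \<Longrightarrow> \<bar>B $$ (0,j)\<bar> \<le> X"
    and rows: "\<And>i j. 1 \<le> i \<Longrightarrow> i < m \<Longrightarrow> j < m \<Longrightarrow> \<bar>B $$ (i,j)\<bar> \<le> Y"
  shows "\<bar>det B\<bar> \<le> fact m * X * Y ^ (m - 1)"
proof -
  let ?P = "{p. p permutes {0..<m}}"
  have "\<bar>det B\<bar> = \<bar>\<Sum>p\<in>?P. signof p * (\<Prod>i = 0..<m. B $$ (i, p i))\<bar>"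
    using det_def'[OF B] by simp
  also have "\<dots> \<le> (\<Sum>p\<in>?P. \<bar>signof p * (\<Prod>i = 0..<m. B $$ (i, p i))\<bar>)"
    by (rule sum_abs)
  also have "\<dots> \<le> (\<Sum>p\<in>?P. X * Y ^ (m - 1))"
  proof (rule sum_mono)
    fix p assume "p \<in> ?P"
    hence pp: "p permutes {0..<m}" by simp
    have pi: "i < m \<Longrightarrow> p i < m" for i using permutes_in_image[OF pp] by auto
    have "\<bar>signof p * (\<Prod>i = 0..<m. B $$ (i, p i))\<bar> = (\<Prod>i = 0..<m. \<bar>B $$ (i, p i)\<bar>)"
      by (simp add: abs_mult abs_prod sign_def)
    also have "\<dots> = \<bar>B $$ (0, p 0)\<bar> * (\<Prod>i = 1..<m. \<bar>B $$ (i, p i)\<bar>)"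
      using m1 by (simp add: prod.atLeast_Suc_lessThan)
    also have "\<dots> \<le> X * (\<Prod>i = 1..<m. Y)"
    proof (rule mult_mono)
      show "(\<Prod>i = 1..<m. \<bar>B $$ (i, p i)\<bar>) \<le> (\<Prod>i = 1..<m. Y)"
        by (rule prod_mono) (use pi rows in auto)
    qed (use row0 pi m1 X0 in \<open>auto intro: prod_nonneg\<close>)
    also have "\<dots> = X * Y ^ (m - 1)" by simp
    finally show "\<bar>signof p * (\<Prod>i = 0..<m. B $$ (i, p i))\<bar> \<le> X * Y ^ (m - 1)" .
  qed
  also have "\<dots> = fact m * X * Y ^ (m - 1)"
    using card_permutations[of "{0..<m}" m] by simp
  finally show ?thesis .
qed



lemma tri3: "\<bar>(x::real) + y - z\<bar> \<le> \<bar>x\<bar> + \<bar>y\<bar> + \<bar>z\<bar>" by arith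

lemma divmul: "(q::real) > 0 \<Longrightarrow> C \<ge> 1 \<Longrightarrow> q / C * x \<le> q * Y \<Longrightarrow> x \<le> C * Y"
  by (simp add: field_simps)

lemma geo_approx:
  fixes P :: "nat \<Rightarrow> real" and q C lam :: real
  assumes n2: "n \<ge> 2" and C1: "C \<ge> 1" and q1: "q \<ge> 1" and P0: "P 0 = q"
   and bnd: "\<forall>i\<le>n. q / C \<le> \<bar>P i\<bar> \<and> \<bar>P i\<bar> \<le> C*q"
   and e: "\<forall>i\<in>{1..n-1}. \<bar>P(i-1)*P(i+1) - (P i)^2\<bar> \<le> C * q powr (1-lam)"
  shows "i \<le> n \<Longrightarrow> \<bar>P i - q*(P 1/q)^i\<bar> \<le> (4*C^(n+2))^i * q powr (-lam)"
proof (induction i rule: less_induct)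
  case (less i)
  define r where "r = P 1 / q"
  define u where "u k = q * r^k" for k
  define d where "d k = P k - u k" for k
  define G where "G = 4*C^(n+2)"
  define W where "W = C^(n+1)"
  have qp: "q > 0" using q1 by simp
  have G1: "G \<ge> 1" proof -
    have "1 \<le> C^(n+2)" using C1 by (rule one_le_power)
    thus ?thesis unfolding G_def by linarith
  qed
  have rC: "\<bar>r\<bar> \<le> C" using bnd n2 qp unfolding r_def by (auto simp: abs_div pos_divide_le_eq)
  have uC: "\<bar>u k\<bar> \<le> C^k * q" for k
    unfolding u_def using qp rC by (simp add: abs_mult power_abs mult.commute power_mono)
  have pl: "0 \<le> q powr (-lam)" by simp
  consider "i = 0" | "i = 1" | k where "i = Suc k" "k \<ge> 1" by (metis One_nat_def le_add1 not0_implies_Suc plus_1_eq_Suc)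
  then show ?case
  proof cases
    case 1 then show ?thesis using P0 pl by simp
  next
    case 2 then show ?thesis using pl qp G1 unfolding G_def by simp
  next
    case 3
    have kn: "k \<le> n - 1" "k + 1 \<le> n" using 3 less.prems by auto
    have IH1: "\<bar>d k\<bar> \<le> G^k * q powr (-lam)"
      using less.IH[of k] 3 kn unfolding d_def u_def r_def G_def by auto
    have IH2: "\<bar>d (k-1)\<bar> \<le> G^(k-1) * q powr (-lam)"
      using less.IH[of "k-1"] 3 kn unfolding d_def u_def r_def G_def by auto
    have uu: "u k ^ 2 = u (k-1) * u (k+1)"
      unfolding u_def using 3 by (cases k) (auto simp: power2_eq_square algebra_simps)
    have ident: "P (k-1) * d (k+1) = d k * (P k + u k) + (P(k-1)*P(k+1) - (P k)^2) - d (k-1) * u (k+1)"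
      unfolding d_def using uu by (simp add: algebra_simps power2_eq_square)
    have ek: "\<bar>P(k-1)*P(k+1) - (P k)^2\<bar> \<le> C * q * q powr (-lam)"
    proof -
      have "k \<in> {1..n-1}" using kn 3 by auto
      hence "\<bar>P(k-1)*P(k+1) - (P k)^2\<bar> \<le> C * q powr (1-lam)" using e by blast
      moreover have "q powr (1-lam) = q * q powr (-lam)" using qp powr_add[of q 1 "-lam"] by simp
      ultimately show ?thesis by simp
    qed
    have WC: "C^k \<le> W" "C \<le> W" "C^(k+1) \<le> W" unfolding W_def
      using C1 kn power_increasing[of k "n+1" C] power_increasing[of 1 "n+1" C]
        power_increasing[of "k+1" "n+1" C] by auto
    have PkC: "\<bar>P k\<bar> \<le> C * q" using bnd kn by auto
    have Pk1: "q / C \<le> \<bar>P (k-1)\<bar>" using bnd kn by auto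
    have "\<bar>d k * (P k + u k)\<bar> \<le> \<bar>d k\<bar> * (2*W*q)"
    proof -
      have "C*q \<le> W*q" "C^k*q \<le> W*q" using WC qp by (simp_all add: mult_right_mono)
      hence "\<bar>P k + u k\<bar> \<le> 2*W*q" using PkC uC[of k] abs_triangle_ineq[of "P k" "u k"]
        by linarith
      thus ?thesis by (simp add: abs_mult mult_left_mono)
    qed
    moreover have "\<bar>d (k-1) * u (k+1)\<bar> \<le> \<bar>d (k-1)\<bar> * (W*q)"
    proof -
      have "C^(k+1)*q \<le> W*q" using WC qp by (simp add: mult_right_mono)
      hence "\<bar>u (k+1)\<bar> \<le> W*q" using uC[of "k+1"] by linarith
      thus ?thesis by (simp add: abs_mult mult_left_mono)
    qed
    ultimately have R: "\<bar>P (k-1) * d (k+1)\<bar> \<le> q * (2*W*\<bar>d k\<bar> + C * q powr (-lam) + W * \<bar>d (k-1)\<bar>)"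
      using ek tri3[of "d k * (P k + u k)" "P(k-1)*P(k+1) - (P k)^2" "d (k-1) * u (k+1)"]
      unfolding ident by (simp add: algebra_simps)
    have "q / C * \<bar>d (k+1)\<bar> \<le> \<bar>P (k-1)\<bar> * \<bar>d (k+1)\<bar>"
      using Pk1 by (rule mult_right_mono) simp
    also have "\<dots> \<le> q * (2*W*\<bar>d k\<bar> + C * q powr (-lam) + W * \<bar>d (k-1)\<bar>)"
      using R by (simp add: abs_mult)
    finally have "\<bar>d (k+1)\<bar> \<le> C * (2*W*\<bar>d k\<bar> + C * q powr (-lam) + W * \<bar>d (k-1)\<bar>)"
      by (rule divmul[OF qp C1])
    also have "\<dots> \<le> C * (2*W*(G^k * q powr (-lam)) + C * (G^k * q powr (-lam)) + W * (G^k * q powr (-lam)))"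
    proof -
      have "G^(k-1) \<le> G^k" using G1 by (simp add: power_increasing)
      hence "\<bar>d (k-1)\<bar> \<le> G^k * q powr (-lam)" using IH2 pl by (meson mult_right_mono order_trans)
      moreover have "q powr (-lam) \<le> G^k * q powr (-lam)" using G1 pl
        by (simp add: mult_le_cancel_right1 one_le_power)
      moreover have "W \<ge> 0" using WC C1 by linarith
      ultimately show ?thesis using IH1 C1
        by (intro mult_left_mono add_mono mult_left_mono) auto
    qed
    also have "\<dots> = (3*C*W + C*C) * (G^k * q powr (-lam))" by (simp add: algebra_simps)
    also have "\<dots> \<le> G * (G^k * q powr (-lam))"
    proof (rule mult_right_mono)
      have "C*C \<le> C * W" using WC C1 by (simp add: mult_left_mono)
      moreover have "C * W = C^(n+2)" unfolding W_def by simp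
      ultimately show "3*C*W + C*C \<le> G" unfolding G_def by linarith
    qed (use G1 pl in simp)
    finally show ?thesis using 3 unfolding d_def u_def r_def G_def by (simp add: algebra_simps)
  qed
qed



lemma sum_L:
  fixes X :: "nat \<Rightarrow> real"
  assumes "i < m"
  shows "(\<Sum>l\<in>{0..<m}. (if i = l then 1 else if l = 0 then - rh else 0) * X l)
         = (if i = 0 then X 0 else X i - rh * X 0)"
proof -
  have "(\<Sum>l\<in>{0..<m}. (if i = l then 1 else if l = 0 then - rh else 0) * X l)
      = (\<Sum>l\<in>{0..<m}. (if l = i then X l else 0) + (if l = 0 then (if i = 0 then 0 else - rh * X 0) else 0))"
    by (rule sum.cong) auto
  also have "\<dots> = (if i = 0 then X 0 else X i - rh * X 0)"
    using assms by (simp add: sum.distrib)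
  finally show ?thesis .
qed

lemma LA:
  fixes rho :: "nat \<Rightarrow> real" and Ar :: "real mat"
  assumes Ar: "Ar \<in> carrier_mat m m"
  defines "L \<equiv> mat m m (\<lambda>(i,j). if i = j then 1 else if j = 0 then - rho i else 0)"
  shows "det (mat m m (\<lambda>(i,j). if i = 0 then Ar $$ (0,j) else Ar $$ (i,j) - rho i * Ar $$ (0,j))) = det Ar"
proof -
  have Lc: "L \<in> carrier_mat m m" unfolding L_def by simp
  have "L * Ar = mat m m (\<lambda>(i,j). if i = 0 then Ar $$ (0,j) else Ar $$ (i,j) - rho i * Ar $$ (0,j))"
  proof (rule eq_matI)
    fix i j assume i: "i < dim_row (mat m m (\<lambda>(i,j). if i = 0 then Ar $$ (0,j) else Ar $$ (i,j) - rho i * Ar $$ (0,j)))"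
      and j: "j < dim_col (mat m m (\<lambda>(i,j). if i = 0 then Ar $$ (0,j) else Ar $$ (i,j) - rho i * Ar $$ (0,j)))"
    have i': "i < m" and j': "j < m" using i j by auto
    have "(L * Ar) $$ (i,j) = (\<Sum>l\<in>{0..<m}. (if i = l then 1 else if l = 0 then - rho i else 0) * Ar $$ (l,j))"
      using i' j' Ar Lc unfolding L_def by (simp add: scalar_prod_def)
    also have "\<dots> = (if i = 0 then Ar $$ (0,j) else Ar $$ (i,j) - rho i * Ar $$ (0,j))"
      by (rule sum_L[OF i'])
    finally show "(L * Ar) $$ (i,j) = mat m m (\<lambda>(i,j). if i = 0 then Ar $$ (0,j) else Ar $$ (i,j) - rho i * Ar $$ (0,j)) $$ (i,j)"
      using i' j' by simp
  qed (use Ar Lc in auto)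
  moreover have "det L = 1"
  proof -
    have "det L = prod_list (diag_mat L)"
      by (rule det_lower_triangular[OF _ Lc]) (auto simp: L_def)
    also have "diag_mat L = map (\<lambda>i. 1) [0..<m]" unfolding diag_mat_def L_def by simp
    finally show ?thesis by (simp add: prod_list.eq_foldr foldr_map o_def, induct m, auto)
  qed
  ultimately show ?thesis using det_mult[OF Lc Ar] by simp
qed


theorem proposition4p3:
  fixes n m :: nat and C :: real
  assumes "n \<ge> 2" and "C \<ge> 1" and "1 \<le> m" and "m \<le> n + 1"
  shows "\<exists>C' > 0. \<forall>(lam::real) (p::nat \<Rightarrow> int) (c::nat \<Rightarrow> nat).
           lam > 0
           \<and> p 0 \<ge> 1
           \<and> (\<forall>i\<le>n. real_of_int (p 0) / C \<le> real_of_int \<bar>p i\<bar>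
                      \<and> real_of_int \<bar>p i\<bar> \<le> C * real_of_int (p 0))
           \<and> (\<forall>i\<in>{1..n-1}. real_of_int \<bar>p (i-1) * p (i+1) - (p i)^2\<bar>
                      \<le> C * real_of_int (p 0) powr (1 - lam))
           \<and> (\<forall>i<m. c i \<le> n + 1 - m)
           \<longrightarrow> real_of_int \<bar>det (mat m m (\<lambda>(i,j). p (c i + j)))\<bar>
                 \<le> C' * real_of_int (p 0) powr (1 - (real m - 1) * lam)"
proof -
  note n2 = assms(1) and C1 = assms(2) and m1 = assms(3) and mn = assms(4)
  define G where "G = 4*C^(n+2)"
  define C' where "C' = fact m * C * ((1 + C^(2*n)) * G^n)^(m-1)"
  have G1: "G \<ge> 1"
  proof -
    have "1 \<le> C^(n+2)" using C1 by (rule one_le_power)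
    thus ?thesis unfolding G_def by linarith
  qed
  have C'pos: "C' > 0" unfolding C'_def using C1 G1
    by (intro mult_pos_pos zero_less_power) (auto intro: add_pos_nonneg)
  show ?thesis
  proof (intro exI[of _ C'] conjI C'pos allI impI)
    fix lam :: real and p :: "nat \<Rightarrow> int" and c :: "nat \<Rightarrow> nat"
    assume H: "lam > 0
           \<and> p 0 \<ge> 1
           \<and> (\<forall>i\<le>n. real_of_int (p 0) / C \<le> real_of_int \<bar>p i\<bar>
                      \<and> real_of_int \<bar>p i\<bar> \<le> C * real_of_int (p 0))
           \<and> (\<forall>i\<in>{1..n-1}. real_of_int \<bar>p (i-1) * p (i+1) - (p i)^2\<bar>
                      \<le> C * real_of_int (p 0) powr (1 - lam))
           \<and> (\<forall>i<m. c i \<le> n + 1 - m)"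
    define P where "P i = real_of_int (p i)" for i
    define q where "q = P 0"
    define r where "r = P 1 / q"
    define D where "D = G^n * q powr (-lam)"
    have q1: "q \<ge> 1" using H unfolding q_def P_def by simp
    have qp: "q > 0" using q1 by simp
    have bnd: "\<forall>i\<le>n. q / C \<le> \<bar>P i\<bar> \<and> \<bar>P i\<bar> \<le> C*q"
      using H unfolding q_def P_def by simp
    have e: "\<forall>i\<in>{1..n-1}. \<bar>P(i-1)*P(i+1) - (P i)^2\<bar> \<le> C * q powr (1-lam)"
      using H unfolding q_def P_def by simp
    have cb: "\<And>i. i < m \<Longrightarrow> c i \<le> n + 1 - m" using H by blast
    have Dn: "\<bar>P i - q*r^i\<bar> \<le> D" if "i \<le> n" for i
    proof -
      have "\<bar>P i - q*r^i\<bar> \<le> G^i * q powr (-lam)"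
        using geo_approx[OF n2 C1 q1 _ bnd e that] unfolding r_def G_def q_def by simp
      also have "\<dots> \<le> D" unfolding D_def
        by (rule mult_right_mono) (use G1 that in \<open>auto intro: power_increasing\<close>)
      finally show ?thesis .
    qed
    have D0: "D \<ge> 0" unfolding D_def using G1 by simp
    have P1: "q / C \<le> \<bar>P 1\<bar>" using bnd n2 by auto
    have Cq: "q / C > 0" using qp C1 by simp
    have rne: "r \<noteq> 0" unfolding r_def using P1 Cq qp by auto
    have rC: "\<bar>r\<bar> \<le> C" using bnd n2 qp unfolding r_def by (auto simp: abs_div pos_divide_le_eq)
    have irC: "\<bar>1/r\<bar> \<le> C"
    proof -
      have "\<bar>1/r\<bar> = q / \<bar>P 1\<bar>" unfolding r_def using qp by (simp add: abs_div)
      also have "\<dots> \<le> C" using P1 Cq C1 qp by (simp add: divide_le_eq field_simps)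
      finally show ?thesis .
    qed
    define rho where "rho k = r^(c k) / r^(c 0)" for k
    have rhoC: "\<bar>rho k\<bar> \<le> C^(2*n)" if "k < m" for k
    proof -
      have ck: "c k \<le> n" "c 0 \<le> n" using cb[OF that] cb[of 0] m1 by auto
      have "\<bar>rho k\<bar> = \<bar>r\<bar>^(c k) * \<bar>1/r\<bar>^(c 0)" unfolding rho_def
        by (simp add: abs_div power_abs power_one_over divide_inverse abs_mult power_inverse)
      also have "\<dots> \<le> C^n * C^n"
      proof (rule mult_mono)
        show "\<bar>r\<bar>^(c k) \<le> C^n"
          using power_mono[OF rC, of "c k"] power_increasing[OF ck(1), of C] C1 by simp
        show "\<bar>1/r\<bar>^(c 0) \<le> C^n"
          using power_mono[OF irC, of "c 0"] power_increasing[OF ck(2), of C] C1 by simp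
      qed (use C1 in auto)
      also have "\<dots> = C^(2*n)" by (simp add: power_add[symmetric] mult_2)
      finally show ?thesis .
    qed
    define A where "A = mat m m (\<lambda>(i,j). p (c i + j))"
    define Ar where "Ar = map_mat real_of_int A"
    have Arc: "Ar \<in> carrier_mat m m" unfolding Ar_def A_def by simp
    have Ar_ij: "Ar $$ (i,j) = P (c i + j)" if "i < m" "j < m" for i j
      using that unfolding Ar_def A_def P_def by simp
    have detAr: "det Ar = real_of_int (det A)" unfolding Ar_def by simp
    define B where "B = mat m m (\<lambda>(i,j). if i = 0 then Ar $$ (0,j) else Ar $$ (i,j) - rho i * Ar $$ (0,j))"
    have detB: "det B = det Ar" unfolding B_def by (rule LA[OF Arc])
    have idx: "c i + j \<le> n" if "i < m" "j < m" for i j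
      using cb[OF that(1)] that mn by linarith
    have "\<bar>det B\<bar> \<le> fact m * (C*q) * ((1 + C^(2*n)) * D) ^ (m - 1)"
    proof (rule det_bound)
      show "B \<in> carrier_mat m m" unfolding B_def by simp
      show "0 \<le> C*q" using C1 qp by simp
      show "0 \<le> (1 + C^(2*n)) * D" using D0 C1 by simp
      show "\<bar>B $$ (0,j)\<bar> \<le> C*q" if "j < m" for j
        using that m1 bnd idx[of 0 j] unfolding B_def by (simp add: Ar_ij)
      show "\<bar>B $$ (i,j)\<bar> \<le> (1 + C^(2*n)) * D" if "1 \<le> i" "i < m" "j < m" for i j
      proof -
        have i0: "0 < m" using that by simp
        have eq: "B $$ (i,j) = (P (c i + j) - q*r^(c i + j)) - rho i * (P (c 0 + j) - q*r^(c 0 + j))"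
        proof -
          have "rho i * (q * r^(c 0 + j)) = q * r^(c i + j)"
            unfolding rho_def using rne by (simp add: power_add field_simps)
          thus ?thesis using that unfolding B_def by (simp add: Ar_ij i0 algebra_simps) metis
        qed
        have "\<bar>B $$ (i,j)\<bar> \<le> \<bar>P (c i + j) - q*r^(c i + j)\<bar> + \<bar>rho i\<bar> * \<bar>P (c 0 + j) - q*r^(c 0 + j)\<bar>"
          unfolding eq by (metis abs_mult abs_triangle_ineq4)
        also have "\<dots> \<le> D + C^(2*n) * D"
          using Dn[OF idx[OF that(2,3)]] Dn[OF idx[OF i0 that(3)]] rhoC[OF that(2)] D0
          by (intro add_mono mult_mono) auto
        finally show ?thesis by (simp add: algebra_simps)
      qed
    qed (use m1 in auto)
    also have "\<dots> = C' * (q * (q powr (-lam))^(m-1))"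
    proof -
      have h: "((1 + C^(2*n)) * D)^(m-1) = ((1 + C^(2*n)) * G^n)^(m-1) * (q powr (-lam))^(m-1)"
        unfolding D_def power_mult_distrib[symmetric] by (simp add: mult.assoc)
      show ?thesis unfolding h C'_def by (simp add: mult_ac)
    qed
    also have "q * (q powr (-lam))^(m-1) = q powr (1 - (real m - 1) * lam)"
    proof -
      have "(q powr (-lam))^(m-1) = q powr (-lam * real (m-1))"
        using qp by (simp add: powr_realpow[symmetric] powr_powr)
      also have "real (m-1) = real m - 1" using m1 by simp
      finally have "q * (q powr (-lam))^(m-1) = q powr 1 * q powr (-lam * (real m - 1))" using qp by simp
      also have "\<dots> = q powr (1 + (-lam * (real m - 1)))" by (rule powr_add[symmetric])
      also have "1 + (-lam * (real m - 1)) = 1 - (real m - 1) * lam" by (simp add: algebra_simps)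
      finally show ?thesis .
    qed
    finally show "real_of_int \<bar>det (mat m m (\<lambda>(i,j). p (c i + j)))\<bar>
                 \<le> C' * real_of_int (p 0) powr (1 - (real m - 1) * lam)"
      using detB detAr unfolding A_def q_def P_def by simp
  qed
qed

end
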